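(* For every dual quaternion $\hat a\in\hat{\mathbb Q}$ there exist a unit dual quaternion $\hat q\in\hat{\mathbb U}$ and a dual complex number $\hat\lambda\in\mathbb{DC}$ such that $\hat q^*\hat a\hat q=\hat\lambda$.
   Context: $\mathbb{Q}$ denotes the real quaternions with units $i,j,k$; complex numbers are identified with quaternions $a+bi$. $\varepsilon$ satisfies $\varepsilon\ne0$, $\varepsilon^2=0$ and commutes with quaternions. A dual quaternion is $\hat p=\tilde p_{st}+\tilde p_{\mathcal I}\varepsilon$ with $\tilde p_{st},\tilde p_{\mathcal I}\in\mathbb Q$; its conjugate is $\hat p^*=\tilde p_{st}^*+\tilde p_{\mathcal I}^*\varepsilon$. $\mathbb{DC}$ is the set of dual complex numbers $a_{st}+a_{\mathcal I}\varepsilon$ with $a_{st},a_{\mathcal I}\in\mathbb C$. The absolute value of $\hat p$ is $|\tilde p_{st}|+\frac{\mathrm{sc}(\tilde p_{st}^*\tilde p_{\mathcal I})}{|\tilde p_{st}|}\varepsilon$ if $\tilde p_{st}\neq0$ and $|\tilde p_{\mathcal I}|\varepsilon$ otherwise, with $\mathrm{sc}(\tilde p)=\frac12(\tilde p+\tilde p^* )$; $\hat p$ is a unit dual quaternion if $|\hat p|=1$ (equivalently $\hat p^*\hat p=\hat p\hat p^*=1$). $\hat{\mathbb U}$ is the set of unit dual quaternions. *)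

theory Defs
  imports Complex_Main
begin

datatype quat = Quat (qre: real) (qi: real) (qj: real) (qk: real)

definition qmult :: "quat \<Rightarrow> quat \<Rightarrow> quat" where
  "qmult p q = Quat
     (qre p * qre q - qi p * qi q - qj p * qj q - qk p * qk q)
     (qre p * qi q + qi p * qre q + qj p * qk q - qk p * qj q)
     (qre p * qj q - qi p * qk q + qj p * qre q + qk p * qi q)
     (qre p * qk q + qi p * qj q - qj p * qi q + qk p * qre q)"

definition qadd :: "quat \<Rightarrow> quat \<Rightarrow> quat" where
  "qadd p q = Quat (qre p + qre q) (qi p + qi q) (qj p + qj q) (qk p + qk q)"

definition qcnj :: "quat \<Rightarrow> quat" where
  "qcnj p = Quat (qre p) (- qi p) (- qj p) (- qk p)"

definition qzero :: quat where "qzero = Quat 0 0 0 0"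

definition qnorm :: "quat \<Rightarrow> real" where
  "qnorm p = sqrt ((qre p)\<^sup>2 + (qi p)\<^sup>2 + (qj p)\<^sup>2 + (qk p)\<^sup>2)"

text \<open>Scalar part sc(p) = (p + p^*)/2, i.e. the real part.\<close>
definition qsc :: "quat \<Rightarrow> real" where
  "qsc p = qre p"

definition is_complex_quat :: "quat \<Rightarrow> bool" where
  "is_complex_quat p \<longleftrightarrow> qj p = 0 \<and> qk p = 0"

text \<open>Dual quaternions p_st + p_I \<epsilon>.\<close>
datatype dquat = DQ (dst: quat) (dinf: quat)

definition dqmult :: "dquat \<Rightarrow> dquat \<Rightarrow> dquat" where
  "dqmult p q = DQ (qmult (dst p) (dst q))
                   (qadd (qmult (dst p) (dinf q)) (qmult (dinf p) (dst q)))"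

definition dqcnj :: "dquat \<Rightarrow> dquat" where
  "dqcnj p = DQ (qcnj (dst p)) (qcnj (dinf p))"

text \<open>Absolute value of a dual quaternion, a dual number given as (standard part, infinitesimal part).\<close>
definition dqabs :: "dquat \<Rightarrow> real \<times> real" where
  "dqabs p = (if dst p \<noteq> qzero
     then (qnorm (dst p), qsc (qmult (qcnj (dst p)) (dinf p)) / qnorm (dst p))
     else (0, qnorm (dinf p)))"

definition unit_dquat :: "dquat \<Rightarrow> bool" where
  "unit_dquat p \<longleftrightarrow> dqabs p = (1, 0)"

definition is_dual_complex :: "dquat \<Rightarrow> bool" where
  "is_dual_complex p \<longleftrightarrow> is_complex_quat (dst p) \<and> is_complex_quat (dinf p)"

end

theory Submission imports Defs begin

definition nsq :: "quat \<Rightarrow> real" where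
  "nsq p = (qre p)\<^sup>2 + (qi p)\<^sup>2 + (qj p)\<^sup>2 + (qk p)\<^sup>2"

lemma quat_eqI: "qre p = qre q \<Longrightarrow> qi p = qi q \<Longrightarrow> qj p = qj q \<Longrightarrow> qk p = qk q \<Longrightarrow> p = q"
  by (cases p; cases q) auto

lemma qmult_assoc: "qmult (qmult p q) r = qmult p (qmult q r)"
  by (rule quat_eqI; simp add: qmult_def algebra_simps)

lemma qcnj_qmult: "qcnj (qmult p q) = qmult (qcnj q) (qcnj p)"
  by (rule quat_eqI; simp add: qmult_def qcnj_def algebra_simps)

lemma qmult_qadd_l: "qmult (qadd p q) r = qadd (qmult p r) (qmult q r)"
  by (rule quat_eqI; simp add: qmult_def qadd_def algebra_simps)

lemma qmult_qadd_r: "qmult r (qadd p q) = qadd (qmult r p) (qmult r q)"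
  by (rule quat_eqI; simp add: qmult_def qadd_def algebra_simps)

lemma qmult_zero: "qmult p qzero = qzero" "qmult qzero p = qzero"
  by (simp_all add: qmult_def qzero_def)

lemma qcnj_zero: "qcnj qzero = qzero"
  by (simp add: qcnj_def qzero_def)

lemma qadd_zero: "qadd p qzero = p" "qadd qzero p = p"
  by (simp_all add: qadd_def qzero_def)

lemma nsq_mult: "nsq (qmult p q) = nsq p * nsq q"
  by (simp add: nsq_def qmult_def power2_eq_square algebra_simps)

lemma nsq_one_ne: "nsq p = 1 \<Longrightarrow> p \<noteq> qzero"
  by (auto simp: nsq_def qzero_def)

lemma nsq_one_norm: "nsq p = 1 \<Longrightarrow> qnorm p = 1"
  by (simp add: nsq_def qnorm_def)

lemma rot_real:
  assumes "nsq p = 1"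
  shows "qmult (qmult (qcnj p) (Quat x 0 0 0)) p = Quat x 0 0 0"
  using assms by (intro quat_eqI; simp add: qmult_def qcnj_def nsq_def; algebra)

lemma rotj:
  fixes n v1 v2 v3 c r :: real
  assumes "n^2 = v1^2+v2^2+v3^2"
  shows "qj (qmult (qmult (qcnj (Quat (c*(n+v1)) 0 (-c*v3) (c*v2))) (Quat r v1 v2 v3)) (Quat (c*(n+v1)) 0 (-c*v3) (c*v2))) = 0
    \<and> qk (qmult (qmult (qcnj (Quat (c*(n+v1)) 0 (-c*v3) (c*v2))) (Quat r v1 v2 v3)) (Quat (c*(n+v1)) 0 (-c*v3) (c*v2))) = 0"
  using assms by (simp add: qmult_def qcnj_def; algebra)

lemma rot: "\<exists>p. nsq p = 1 \<and> is_complex_quat (qmult (qmult (qcnj p) a) p)"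
proof (cases "qj a = 0 \<and> qk a = 0")
  case True
  then show ?thesis
    by (intro exI[of _ "Quat 1 0 0 0"]) (simp add: nsq_def is_complex_quat_def qmult_def qcnj_def)
next
  case False
  define v1 where "v1 = qi a"
  define v2 where "v2 = qj a"
  define v3 where "v3 = qk a"
  define n where "n = sqrt (v1^2+v2^2+v3^2)"
  have n2: "n^2 = v1^2+v2^2+v3^2" unfolding n_def by simp
  have pos: "v2^2+v3^2 > 0" using False v2_def v3_def
    by (simp add: sum_power2_gt_zero_iff)
  have "sqrt (v1^2) < n" unfolding n_def using pos
    by (intro real_sqrt_less_mono) simp
  hence "\<bar>v1\<bar> < n" by simp
  hence nv: "n + v1 > 0" by linarith
  define N where "N = (n+v1)^2 + v2^2 + v3^2"
  have Npos: "N > 0" unfolding N_def using nv pos by (smt (verit) zero_le_power2)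
  define c where "c = 1 / sqrt N"
  have c2: "c^2 * N = 1" unfolding c_def using Npos by (simp add: power_divide)
  define p where "p = Quat (c*(n+v1)) 0 (-c*v3) (c*v2)"
  have "nsq p = c^2 * N" unfolding p_def nsq_def N_def by (simp add: power2_eq_square algebra_simps)
  hence "nsq p = 1" using c2 by simp
  moreover have "a = Quat (qre a) v1 v2 v3" unfolding v1_def v2_def v3_def by (cases a) simp
  moreover have "is_complex_quat (qmult (qmult (qcnj p) (Quat (qre a) v1 v2 v3)) p)"
    using rotj[OF n2, of c "qre a"] unfolding p_def is_complex_quat_def by blast
  ultimately show ?thesis by metis
qed


lemma dual_part:
  fixes x y :: real
  assumes "y \<noteq> 0"
  shows "is_complex_quat (qadd (qmult (Quat x y 0 0) (Quat 0 0 (- qk b / (2*y)) (qj b / (2*y))))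
           (qadd b (qmult (qcnj (Quat 0 0 (- qk b / (2*y)) (qj b / (2*y)))) (Quat x y 0 0))))"
  using assms by (simp add: is_complex_quat_def qmult_def qadd_def qcnj_def field_simps)

theorem lemma3p3:
  fixes a :: dquat
  shows "\<exists>q lam. unit_dquat q \<and> is_dual_complex lam \<and>
           dqmult (dqmult (dqcnj q) a) q = lam"
proof -
  obtain a0 a1 where a: "a = DQ a0 a1" by (cases a)
  obtain p where pu: "nsq p = 1" and cp: "is_complex_quat (qmult (qmult (qcnj p) a0) p)"
    using rot by blast
  define b0 where "b0 = qmult (qmult (qcnj p) a0) p"
  define b1 where "b1 = qmult (qmult (qcnj p) a1) p"
  have b0e: "b0 = Quat (qre b0) (qi b0) 0 0" using cp unfolding b0_def is_complex_quat_def
    by (cases "qmult (qmult (qcnj p) a0) p") simp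
  show ?thesis
  proof (cases "qi b0 = 0")
    case False
    define y where "y = qi b0"
    define r where "r = Quat 0 0 (- qk b1 / (2*y)) (qj b1 / (2*y))"
    define q where "q = DQ p (qmult p r)"
    have sc0: "qsc (qmult (qcnj p) (qmult p r)) = 0"
      by (simp add: qsc_def qmult_def qcnj_def r_def algebra_simps)
    have u: "unit_dquat q"
      using pu sc0 unfolding unit_dquat_def dqabs_def q_def
      by (simp add: nsq_one_ne nsq_one_norm)
    have st: "dst (dqmult (dqmult (dqcnj q) a) q) = b0"
      by (simp add: dqmult_def dqcnj_def q_def a b0_def)
    have inf: "dinf (dqmult (dqmult (dqcnj q) a) q) = qadd (qmult b0 r) (qadd b1 (qmult (qcnj r) b0))"
      by (simp add: dqmult_def dqcnj_def q_def a b0_def b1_def qmult_qadd_l qmult_qadd_r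
          qcnj_qmult qmult_assoc)
    have "is_complex_quat (qadd (qmult b0 r) (qadd b1 (qmult (qcnj r) b0)))"
      using dual_part[of y "qre b0" b1] False b0e unfolding r_def y_def by metis
    then have "is_dual_complex (dqmult (dqmult (dqcnj q) a) q)"
      using st inf cp b0_def unfolding is_dual_complex_def by simp
    with u show ?thesis by blast
  next
    case True
    obtain p2 where pu2: "nsq p2 = 1" and cp2: "is_complex_quat (qmult (qmult (qcnj p2) b1) p2)"
      using rot by blast
    define q where "q = DQ (qmult p p2) qzero"
    have u: "unit_dquat q"
    proof -
      have n: "nsq (qmult p p2) = 1" using pu pu2 by (simp add: nsq_mult)
      show ?thesis using nsq_one_ne[OF n] nsq_one_norm[OF n] unfolding unit_dquat_def dqabs_def q_def
        by (simp add: qmult_def qcnj_def qsc_def qzero_def)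
    qed
    have b0r: "b0 = Quat (qre b0) 0 0 0" using b0e True by simp
    have st: "dst (dqmult (dqmult (dqcnj q) a) q) = qmult (qmult (qcnj p2) b0) p2"
      by (simp add: dqmult_def dqcnj_def q_def a b0_def qcnj_qmult qmult_assoc)
    also have "\<dots> = b0" using rot_real[OF pu2, of "qre b0"] b0r by simp
    finally have st: "dst (dqmult (dqmult (dqcnj q) a) q) = b0" .
    have inf: "dinf (dqmult (dqmult (dqcnj q) a) q) = qmult (qmult (qcnj p2) b1) p2"
      by (simp add: dqmult_def dqcnj_def q_def a b1_def qcnj_qmult qmult_assoc qmult_zero qadd_zero qcnj_zero)
    have "is_dual_complex (dqmult (dqmult (dqcnj q) a) q)"
      using st inf cp cp2 b0_def unfolding is_dual_complex_def by simp
    with u show ?thesis by blast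
  qed
qed

end
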